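(* Let $\mathcal Y=\min\{a_2\mathfrak g_{sr},\mathfrak g_{rd}\}$ and $\bar C_{s_2,\mathrm{MRC}}:=\tfrac12\mathbb E[\log_2(1+\rho\mathcal Y)]$. Then, with $\Xi=\frac{m_{sr}}{\Omega_{sr}a_2}+\frac{m_{rd}}{\Omega_{rd}}$, $$\bar C_{s_2,\mathrm{MRC}}=\frac{1}{2\ln2}\sum_{\mu=0}^{m_{sr}N_r-1}\sum_{\nu=0}^{m_{rd}N_d-1}\frac{m_{sr}^{\mu}m_{rd}^{\nu}}{\Omega_{sr}^{\mu}\Omega_{rd}^{\nu}a_2^{\mu}\,\mu!\,\nu!}\,\frac{\Gamma(\mu+\nu+1)}{\rho^{\mu+\nu}}\,e^{\Xi/\rho}\,\Gamma\Big[-\mu-\nu,\tfrac{\Xi}{\rho}\Big].$$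
   Context: Let $N_r,N_d$ be positive integers, $m_{sr},m_{sd},m_{rd}$ positive integers, and $\Omega_{sr},\Omega_{sd},\Omega_{rd}>0$. Let $\{G_{sr,i}\}_{i=1}^{N_r}$, $\{G_{sd,j}\}_{j=1}^{N_d}$, $\{G_{rd,k}\}_{k=1}^{N_d}$ be mutually independent random variables, where each $G_{sr,i}$ has the Gamma density $f(x)=\frac{(m_{sr}/\Omega_{sr})^{m_{sr}}x^{m_{sr}-1}}{\Gamma(m_{sr})}e^{-m_{sr}x/\Omega_{sr}}$, $x>0$, and analogously $G_{sd,j}$ with parameters $(m_{sd},\Omega_{sd})$ and $G_{rd,k}$ with $(m_{rd},\Omega_{rd})$. MRC gains: $\mathfrak g_{sr}=\sum_{i=1}^{N_r}G_{sr,i}$, $\mathfrak g_{sd}=\sum_{j=1}^{N_d}G_{sd,j}$, $\mathfrak g_{rd}=\sum_{k=1}^{N_d}G_{rd,k}$. Let $\rho>0$ and $a_2\in(0,1/2)$. $\Gamma[s,z]=\int_z^\infty t^{s-1}e^{-t}\,dt$ ($z>0$) is the upper incomplete Gamma function. *)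

theory Defs
  imports "HOL-Probability.Probability"
begin

text \<open>Gamma (Nakagami-m power) density with shape m and mean Omega, as in the paper;
  zero for x \<le> 0.\<close>
definition gamma_pdf :: "nat \<Rightarrow> real \<Rightarrow> real \<Rightarrow> real" where
  "gamma_pdf m \<Omega> x =
     (if x > 0 then (real m / \<Omega>) ^ m * x ^ (m - 1) / Gamma (real m) * exp (- real m * x / \<Omega>)
      else 0)"

definition upper_inc_Gamma :: "real \<Rightarrow> real \<Rightarrow> real" where
  "upper_inc_Gamma s z = (LBINT t:{z..}. t powr (s - 1) * exp (- t))"

end

theory Submission
  imports Defs
begin


lemma nn_int_pow_exp:
  assumes l: "0 < l"
  shows "(\<integral>\<^sup>+x. ennreal (x^n * exp(-l*x)) * indicator {0..} x \<partial>lborel) = ennreal (fact n / l^(n+1))"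
proof -
  have "(\<integral>\<^sup>+x. ennreal (x^n * exp(-l*x)) * indicator {0..} x \<partial>lborel)
      = (\<integral>\<^sup>+x. ennreal (1/l) * ennreal (erlang_density 0 l x * x ^ n) \<partial>lborel)"
    using l by (intro nn_integral_cong) (auto simp: erlang_density_def ennreal_mult'[symmetric] split: split_indicator)
  also have "\<dots> = ennreal (1/l) * (\<integral>\<^sup>+x. ennreal (erlang_density 0 l x * x ^ n) \<partial>lborel)"
    by (rule nn_integral_cmult) auto
  also have "\<dots> = ennreal (1/l) * ennreal (fact n / l^n)"
    using nn_integral_erlang_ith_moment[OF l, of 0 n] by simp
  also have "\<dots> = ennreal (fact n / l^(n+1))"
    using l by (simp add: ennreal_mult'[symmetric] field_simps)
  finally show ?thesis .
qed


lemma nn_int_upper_Gamma: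
  assumes z: "0 < z"
  shows "(\<integral>\<^sup>+s. ennreal (indicator {z..} s * (s powr (- real n - 1) * exp (-s))) \<partial>lborel)
     = ennreal (upper_inc_Gamma (- real n) z)"
proof -
  let ?f = "\<lambda>s::real. indicator {z..} s * (s powr (- real n - 1) * exp (-s))"
  have meas: "?f \<in> borel_measurable lborel" by measurable
  have nn: "\<And>s. 0 \<le> ?f s" by (simp add: indicator_def)
  have "(\<integral>\<^sup>+s. ennreal (?f s) \<partial>lborel) \<le> (\<integral>\<^sup>+s. ennreal (z powr (- real n - 1)) * (ennreal (exp (- s)) * indicator {0..} s) \<partial>lborel)"
  proof (intro nn_integral_mono)
    fix s :: real
    show "ennreal (?f s) \<le> ennreal (z powr (- real n - 1)) * (ennreal (exp (- s)) * indicator {0..} s)"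
    proof (cases "z \<le> s")
      case True
      then have "s powr (- real n - 1) \<le> z powr (- real n - 1)"
        using z by (intro powr_mono2') auto
      then have "?f s \<le> z powr (- real n - 1) * exp (-s)" using True by (simp add: mult_right_mono)
      then show ?thesis using True z by (simp add: ennreal_mult'[symmetric] indicator_def)
    qed (simp add: indicator_def)
  qed
  also have "\<dots> = ennreal (z powr (- real n - 1)) * ennreal (fact 0 / 1^(0+1))"
    using nn_int_pow_exp[of 1 0] by (subst nn_integral_cmult) simp_all
  also have "\<dots> < \<infinity>" by (simp add: ennreal_mult'[symmetric])
  finally have fin: "(\<integral>\<^sup>+s. ennreal (?f s) \<partial>lborel) < \<infinity>" .
  have int: "integrable lborel ?f"
    by (rule integrableI_nonneg[OF meas]) (use nn fin in auto)
  have "(\<integral>\<^sup>+s. ennreal (?f s) \<partial>lborel) = ennreal (integral\<^sup>L lborel ?f)"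
    by (rule nn_integral_eq_integral[OF int]) (use nn in auto)
  also have "integral\<^sup>L lborel ?f = upper_inc_Gamma (- real n) z"
    unfolding upper_inc_Gamma_def set_lebesgue_integral_def by (simp add: algebra_simps)
  finally show ?thesis .
qed


lemma subst_aux:
  assumes X: "0 < \<Xi>" and r: "0 < \<rho>"
  shows "\<bar>\<rho>\<bar> * (indicator {0..} (- \<Xi> + \<rho> * s) * (exp (- (- \<Xi> + \<rho> * s) / \<rho>) * fact n / (\<Xi> + (- \<Xi> + \<rho> * s))^(n+1)))
    = fact n / \<rho>^n * exp (\<Xi>/\<rho>) * (indicator {\<Xi>/\<rho>..} s * (s powr (- real n - 1) * exp (-s)))"
proof (cases "\<Xi>/\<rho> \<le> s")
  case True
  then have s: "0 < s" using X r by (smt (verit) divide_pos_pos)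
  have i1: "indicator {0..} (- \<Xi> + \<rho> * s) = (1::real)" using True r by (simp add: field_simps)
  have i2: "indicator {\<Xi>/\<rho>..} s = (1::real)" using True by simp
  have p: "s powr (- real n - 1) = 1 / s^(n+1)"
  proof -
    have "s powr (- real n - 1) = inverse (s powr (real (n+1)))"
      using powr_minus[of s "real (n+1)"] by (simp add: algebra_simps del: powr_minus) (metis minus_diff_eq minus_real_def uminus_add_conv_diff add.commute)
    also have "\<dots> = 1 / s^(n+1)" by (subst powr_realpow[OF s]) (simp add: divide_inverse)
    finally show ?thesis .
  qed
  have e: "exp (- (- \<Xi> + \<rho> * s) / \<rho>) = exp (\<Xi>/\<rho>) * exp (-s)"
    using r by (simp add: exp_add[symmetric] field_simps)
  show ?thesis unfolding i1 i2 p e using r s by (simp add: field_simps power_mult_distrib)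
next
  case False
  then have "\<not> 0 \<le> - \<Xi> + \<rho> * s" using r by (simp add: field_simps)
  then show ?thesis using False by simp
qed

lemma key_integral:
  assumes X: "0 < \<Xi>" and r: "0 < \<rho>"
  shows "(\<integral>\<^sup>+t. ennreal (indicator {0..} t * (\<rho> * t^n * exp (- \<Xi> * t) / (1 + \<rho> * t))) \<partial>lborel)
     = ennreal (fact n / \<rho>^n * exp (\<Xi>/\<rho>) * upper_inc_Gamma (- real n) (\<Xi>/\<rho>))"
proof -
  let ?g = "\<lambda>t w::real. ennreal (indicator {0..} t * indicator {0..} w * (t^n * exp (- \<Xi> * t) * exp (- (t + 1/\<rho>) * w)))"
  have step1: "(\<integral>\<^sup>+t. ennreal (indicator {0..} t * (\<rho> * t^n * exp (- \<Xi> * t) / (1 + \<rho> * t))) \<partial>lborel)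
     = (\<integral>\<^sup>+t. \<integral>\<^sup>+w. ?g t w \<partial>lborel \<partial>lborel)"
  proof (intro nn_integral_cong)
    fix t :: real
    show "ennreal (indicator {0..} t * (\<rho> * t^n * exp (- \<Xi> * t) / (1 + \<rho> * t))) = (\<integral>\<^sup>+w. ?g t w \<partial>lborel)"
    proof (cases "0 \<le> t")
      case True
      have l: "0 < t + 1/\<rho>" using True r by (simp add: add_nonneg_pos)
      have "(\<integral>\<^sup>+w. ?g t w \<partial>lborel) = (\<integral>\<^sup>+w. ennreal (t^n * exp (- \<Xi> * t)) * (ennreal (w^0 * exp (- (t + 1/\<rho>) * w)) * indicator {0..} w) \<partial>lborel)"
        using True by (intro nn_integral_cong) (auto simp: ennreal_mult'[symmetric] indicator_def)
      also have "\<dots> = ennreal (t^n * exp (- \<Xi> * t)) * ennreal (fact 0 / (t + 1/\<rho>)^(0+1))"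
        using nn_int_pow_exp[OF l, of 0] by (subst nn_integral_cmult) simp_all
      also have "\<dots> = ennreal (indicator {0..} t * (\<rho> * t^n * exp (- \<Xi> * t) / (1 + \<rho> * t)))"
        using True r l by (simp add: ennreal_mult'[symmetric] field_simps)
      finally show ?thesis by simp
    qed (simp add: indicator_def)
  qed
  also have "\<dots> = (\<integral>\<^sup>+w. \<integral>\<^sup>+t. ?g t w \<partial>lborel \<partial>lborel)"
    by (subst lborel_pair.Fubini') (auto simp: case_prod_unfold)
  also have "\<dots> = (\<integral>\<^sup>+w. ennreal (indicator {0..} w * (exp (- w / \<rho>) * fact n / (\<Xi> + w)^(n+1))) \<partial>lborel)"
  proof (intro nn_integral_cong)
    fix w :: real
    show "(\<integral>\<^sup>+t. ?g t w \<partial>lborel) = ennreal (indicator {0..} w * (exp (- w / \<rho>) * fact n / (\<Xi> + w)^(n+1)))"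
    proof (cases "0 \<le> w")
      case True
      have l: "0 < \<Xi> + w" using True X by simp
      have "(\<integral>\<^sup>+t. ?g t w \<partial>lborel) = (\<integral>\<^sup>+t. ennreal (exp (- w / \<rho>)) * (ennreal (t^n * exp (- (\<Xi> + w) * t)) * indicator {0..} t) \<partial>lborel)"
        using True by (intro nn_integral_cong) (auto simp: ennreal_mult'[symmetric] indicator_def exp_add[symmetric] algebra_simps)
      also have "\<dots> = ennreal (exp (- w / \<rho>)) * ennreal (fact n / (\<Xi> + w)^(n+1))"
        using nn_int_pow_exp[OF l, of n] by (subst nn_integral_cmult) simp_all
      also have "\<dots> = ennreal (indicator {0..} w * (exp (- w / \<rho>) * fact n / (\<Xi> + w)^(n+1)))"
        using True l by (simp add: ennreal_mult'[symmetric] field_simps)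
      finally show ?thesis .
    qed (simp add: indicator_def)
  qed
  also have "\<dots> = ennreal \<bar>\<rho>\<bar> * (\<integral>\<^sup>+s. ennreal (indicator {0..} (- \<Xi> + \<rho> * s) * (exp (- (- \<Xi> + \<rho> * s) / \<rho>) * fact n / (\<Xi> + (- \<Xi> + \<rho> * s))^(n+1))) \<partial>lborel)"
    by (rule nn_integral_real_affine) (use r in auto)
  also have "\<dots> = (\<integral>\<^sup>+s. ennreal (fact n / \<rho>^n * exp (\<Xi>/\<rho>)) * ennreal (indicator {\<Xi>/\<rho>..} s * (s powr (- real n - 1) * exp (-s))) \<partial>lborel)"
    apply (subst nn_integral_cmult[symmetric], simp)
    apply (intro nn_integral_cong)
    apply (subst ennreal_mult'[symmetric], use r in simp)
    apply (subst ennreal_mult'[symmetric], use r in simp)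
    apply (intro arg_cong[where f=ennreal])
    using subst_aux[OF X r] by simp
  also have "\<dots> = ennreal (fact n / \<rho>^n * exp (\<Xi>/\<rho>)) * ennreal (upper_inc_Gamma (- real n) (\<Xi>/\<rho>))"
    by (subst nn_integral_cmult) (simp_all add: nn_int_upper_Gamma X r)
  also have "\<dots> = ennreal (fact n / \<rho>^n * exp (\<Xi>/\<rho>) * upper_inc_Gamma (- real n) (\<Xi>/\<rho>))"
    using r by (subst ennreal_mult') auto
  finally show ?thesis .
qed

lemma upper_inc_Gamma_nonneg: "0 \<le> upper_inc_Gamma s z"
  unfolding upper_inc_Gamma_def set_lebesgue_integral_def
  by (intro integral_nonneg_AE) (auto simp: indicator_def)


lemma gamma_erlang:
  assumes m: "0 < m" and O: "0 < \<Omega>"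
    and D: "distributed M lborel X (\<lambda>x. ennreal (gamma_pdf m \<Omega> x))"
  shows "distributed M lborel X (\<lambda>x. ennreal (erlang_density (m - 1) (real m / \<Omega>) x))"
proof -
  have G: "Gamma (real m) = fact (m - 1)"
    using Gamma_fact[of "m - 1", where 'a=real] m by (simp add: of_nat_diff)
  have "AE x in lborel. ennreal (gamma_pdf m \<Omega> x) = ennreal (erlang_density (m - 1) (real m / \<Omega>) x)"
  proof (rule eventually_mono[OF AE_lborel_singleton[of 0]])
    fix x :: real assume "x \<noteq> 0"
    show "ennreal (gamma_pdf m \<Omega> x) = ennreal (erlang_density (m - 1) (real m / \<Omega>) x)"
    proof (cases "0 < x")
      case True
      have "Suc (m - 1) = m" using m by simp
      then show ?thesis using True unfolding gamma_pdf_def erlang_density_def G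
        by (simp add: field_simps)
    next
      case False
      with \<open>x \<noteq> 0\<close> show ?thesis by (simp add: gamma_pdf_def erlang_density_def)
    qed
  qed
  then show ?thesis using D
    by (subst distributed_cong_density[symmetric]) (auto simp: gamma_pdf_def)
qed

lemma ln_integral:
  assumes y: "0 \<le> y" and r: "0 < \<rho>"
  shows "(\<integral>\<^sup>+t. ennreal (indicator {0..} t * (if t < y then 1 else 0) * (\<rho> / (1 + \<rho> * t))) \<partial>lborel)
     = ennreal (ln (1 + \<rho> * y))"
proof -
  have "(\<integral>\<^sup>+t. ennreal (indicator {0..} t * (if t < y then 1 else 0) * (\<rho> / (1 + \<rho> * t))) \<partial>lborel)
    = (\<integral>\<^sup>+t. ennreal (\<rho> / (1 + \<rho> * t)) * indicator {0..y} t \<partial>lborel)"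
    by (intro nn_integral_cong_AE eventually_mono[OF AE_lborel_singleton[of y]])
       (auto simp: indicator_def)
  also have "\<dots> = ennreal (ln (1 + \<rho> * y) - ln (1 + \<rho> * 0))"
  proof (rule nn_integral_FTC_Icc)
    fix x assume x: "x \<in> {0..y}"
    then have "0 < 1 + \<rho> * x" using r by (simp add: add_pos_nonneg)
    then show "DERIV (\<lambda>x. ln (1 + \<rho> * x)) x :> \<rho> / (1 + \<rho> * x)"
      by (auto intro!: derivative_eq_intros)
    show "0 \<le> \<rho> / (1 + \<rho> * x)" using x r by simp
  qed (use y in auto)
  finally show ?thesis by simp
qed


lemma tail_sum:
  assumes "0 < l" "0 \<le> a" "0 < K"
  shows "1 - erlang_CDF (K - 1) l a = (\<Sum>n<K. (l * a)^n * exp (- l * a) / fact n)"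
proof -
  have "{..K - 1} = {..<K}" using assms by auto
  then show ?thesis using assms by (simp add: erlang_CDF_def)
qed

theorem mainTheorem4:
  fixes M :: "'a measure"
    and Nr Nd msr msd mrd :: nat
    and \<Omega>sr \<Omega>sd \<Omega>rd \<rho> a2 :: real
    and Gsr Gsd Grd :: "nat \<Rightarrow> 'a \<Rightarrow> real"
  assumes "prob_space M"
    and "Nr > 0" "Nd > 0" "msr > 0" "msd > 0" "mrd > 0"
    and "\<Omega>sr > 0" "\<Omega>sd > 0" "\<Omega>rd > 0" "\<rho> > 0" "0 < a2" "a2 < 1/2"
    and "\<And>i. i \<in> {1..Nr} \<Longrightarrow> distributed M lborel (Gsr i) (\<lambda>x. ennreal (gamma_pdf msr \<Omega>sr x))"
    and "\<And>j. j \<in> {1..Nd} \<Longrightarrow> distributed M lborel (Gsd j) (\<lambda>x. ennreal (gamma_pdf msd \<Omega>sd x))"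
    and "\<And>k. k \<in> {1..Nd} \<Longrightarrow> distributed M lborel (Grd k) (\<lambda>x. ennreal (gamma_pdf mrd \<Omega>rd x))"
    and "prob_space.indep_vars M (\<lambda>_. borel)
           (\<lambda>t. case t of Inl i \<Rightarrow> Gsr i | Inr (Inl j) \<Rightarrow> Gsd j | Inr (Inr k) \<Rightarrow> Grd k)
           (Inl ` {1..Nr} \<union> Inr ` Inl ` {1..Nd} \<union> Inr ` Inr ` {1..Nd})"
  shows
    "(let gsr = (\<lambda>\<omega>. \<Sum>i=1..Nr. Gsr i \<omega>);
          grd = (\<lambda>\<omega>. \<Sum>k=1..Nd. Grd k \<omega>);
          Y = (\<lambda>\<omega>. min (a2 * gsr \<omega>) (grd \<omega>));
          \<Xi> = real msr / (\<Omega>sr * a2) + real mrd / \<Omega>rd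
      in (1/2) * (\<integral>\<omega>. log 2 (1 + \<rho> * Y \<omega>) \<partial>M) =
         1 / (2 * ln 2) *
         (\<Sum>\<mu><msr * Nr. \<Sum>\<nu><mrd * Nd.
            real msr ^ \<mu> * real mrd ^ \<nu> /
              (\<Omega>sr ^ \<mu> * \<Omega>rd ^ \<nu> * a2 ^ \<mu> * fact \<mu> * fact \<nu>)
            * (Gamma (real (\<mu> + \<nu> + 1)) / \<rho> ^ (\<mu> + \<nu>))
            * exp (\<Xi> / \<rho>) * upper_inc_Gamma (- real (\<mu> + \<nu>)) (\<Xi> / \<rho>)))"
proof -
  note A = assms
  interpret P: prob_space M by fact
  define F where "F = (\<lambda>t. case t of Inl i \<Rightarrow> Gsr i | Inr (Inl j) \<Rightarrow> Gsd j | Inr (Inr k) \<Rightarrow> Grd k)"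
  define gsr where "gsr = (\<lambda>\<omega>. \<Sum>i=1..Nr. Gsr i \<omega>)"
  define grd where "grd = (\<lambda>\<omega>. \<Sum>k=1..Nd. Grd k \<omega>)"
  define Y where "Y = (\<lambda>\<omega>. min (a2 * gsr \<omega>) (grd \<omega>))"
  define \<Xi> where "\<Xi> = real msr / (\<Omega>sr * a2) + real mrd / \<Omega>rd"
  define l1 where "l1 = real msr / \<Omega>sr"
  define l2 where "l2 = real mrd / \<Omega>rd"
  define c where "c = (\<lambda>\<mu> \<nu>. real msr ^ \<mu> * real mrd ^ \<nu> /
              (\<Omega>sr ^ \<mu> * \<Omega>rd ^ \<nu> * a2 ^ \<mu> * fact \<mu> * fact \<nu>))"
  define S where "S = (\<Sum>\<mu><msr * Nr. \<Sum>\<nu><mrd * Nd. c \<mu> \<nu> * (fact (\<mu> + \<nu>) / \<rho> ^ (\<mu> + \<nu>)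
            * exp (\<Xi> / \<rho>) * upper_inc_Gamma (- real (\<mu> + \<nu>)) (\<Xi> / \<rho>)))"
  have l1: "0 < l1" and l2: "0 < l2" and Xi: "0 < \<Xi>" and r: "0 < \<rho>" and a2: "0 < a2"
    using A(2-12) by (auto simp: l1_def l2_def \<Xi>_def intro!: add_pos_pos)
  have c_nn: "0 \<le> c \<mu> \<nu>" for \<mu> \<nu> using A unfolding c_def by simp
  have S_nn: "0 \<le> S" unfolding S_def
    using c_nn r by (intro sum_nonneg mult_nonneg_nonneg upper_inc_Gamma_nonneg) auto
  have ind: "P.indep_vars (\<lambda>_. borel) F (Inl ` {1..Nr} \<union> Inr ` Inl ` {1..Nd} \<union> Inr ` Inr ` {1..Nd})"
    using A(16) unfolding F_def .
  have Dsr: "distributed M lborel gsr (\<lambda>x. ennreal (erlang_density (msr * Nr - 1) l1 x))"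
  proof -
    have "distributed M lborel (\<lambda>x. \<Sum>i\<in>Inl ` {1..Nr}. F i x) (\<lambda>x. ennreal (erlang_density ((\<Sum>i\<in>(Inl ` {1..Nr} :: (nat + nat + nat) set). Suc (msr - 1)) - 1) l1 x))"
    proof (rule P.erlang_distributed_sum[where k="\<lambda>_. _"])
      show "finite (Inl ` {1..Nr})" by simp
      show "Inl ` {1..Nr} \<noteq> {}" using A(2) by auto
      show "0 < l1" by fact
      show "P.indep_vars (\<lambda>i. borel) F (Inl ` {1..Nr})"
        by (rule P.indep_vars_subset[OF ind]) auto
      fix i :: "nat + nat + nat" assume "i \<in> Inl ` {1..Nr}"
      then obtain j where j: "j \<in> {1..Nr}" "i = Inl j" by auto
      show "distributed M lborel (F i) (\<lambda>x. ennreal (erlang_density (msr - 1) l1 x))"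
        unfolding j(2) F_def l1_def using gamma_erlang[OF A(4) A(7) A(13)[OF j(1)]] by simp
    qed
    moreover have "(\<lambda>x. \<Sum>i\<in>Inl ` {1..Nr}. F i x) = gsr"
      unfolding gsr_def F_def by (subst sum.reindex) (auto simp: inj_on_def)
    moreover have "(\<Sum>i\<in>(Inl ` {1..Nr} :: (nat + nat + nat) set). Suc (msr - 1)) = msr * Nr"
      using A(4) by (simp add: card_image inj_on_def)
    ultimately show ?thesis by simp
  qed
  have Drd: "distributed M lborel grd (\<lambda>x. ennreal (erlang_density (mrd * Nd - 1) l2 x))"
  proof -
    have "distributed M lborel (\<lambda>x. \<Sum>i\<in>Inr ` Inr ` {1..Nd}. F i x) (\<lambda>x. ennreal (erlang_density ((\<Sum>i\<in>(Inr ` Inr ` {1..Nd} :: (nat + nat + nat) set). Suc (mrd - 1)) - 1) l2 x))"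
    proof (rule P.erlang_distributed_sum[where k="\<lambda>_. _"])
      show "finite (Inr ` Inr ` {1..Nd})" by simp
      show "Inr ` Inr ` {1..Nd} \<noteq> {}" using A(3) by auto
      show "0 < l2" by fact
      show "P.indep_vars (\<lambda>i. borel) F (Inr ` Inr ` {1..Nd})"
        by (rule P.indep_vars_subset[OF ind]) auto
      fix i :: "nat + nat + nat" assume "i \<in> Inr ` Inr ` {1..Nd}"
      then obtain j where j: "j \<in> {1..Nd}" "i = Inr (Inr j)" by auto
      show "distributed M lborel (F i) (\<lambda>x. ennreal (erlang_density (mrd - 1) l2 x))"
        unfolding j(2) F_def l2_def using gamma_erlang[OF A(6) A(9) A(15)[OF j(1)]] by simp
    qed
    moreover have "(\<lambda>x. \<Sum>i\<in>Inr ` Inr ` {1..Nd}. F i x) = grd"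
      unfolding grd_def F_def by (subst sum.reindex) (auto simp: inj_on_def sum.reindex)
    moreover have "(\<Sum>i\<in>(Inr ` Inr ` {1..Nd} :: (nat + nat + nat) set). Suc (mrd - 1)) = mrd * Nd"
      using A(6) by (simp add: card_image inj_on_def)
    ultimately show ?thesis by simp
  qed
  have indep: "P.indep_var borel gsr borel grd"
  proof -
    let ?A = "Inl ` {1..Nr} :: (nat + nat + nat) set"
    let ?B = "Inr ` Inr ` {1..Nd} :: (nat + nat + nat) set"
    have iv: "P.indep_var (PiM ?A (\<lambda>_. borel)) (\<lambda>\<omega>. restrict (\<lambda>i. F i \<omega>) ?A) (PiM ?B (\<lambda>_. borel)) (\<lambda>\<omega>. restrict (\<lambda>i. F i \<omega>) ?B)"
      by (rule P.indep_var_restrict[OF ind]) auto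
    have m1: "(\<lambda>f. \<Sum>i=1..Nr. f (Inl i)) \<in> borel_measurable (PiM ?A (\<lambda>_. borel :: real measure))"
    proof (rule borel_measurable_sum[where f="\<lambda>i f. f (Inl i)" and S="{1..Nr}"])
      fix i assume "i \<in> {1..Nr}"
      then show "(\<lambda>f. f (Inl i)) \<in> borel_measurable (PiM ?A (\<lambda>_. borel :: real measure))"
        by (intro measurable_component_singleton) auto
    qed
    have m2: "(\<lambda>f. \<Sum>k=1..Nd. f (Inr (Inr k))) \<in> borel_measurable (PiM ?B (\<lambda>_. borel :: real measure))"
    proof (rule borel_measurable_sum[where f="\<lambda>i f. f (Inr (Inr i))" and S="{1..Nd}"])
      fix i assume "i \<in> {1..Nd}"
      then show "(\<lambda>f. f (Inr (Inr i))) \<in> borel_measurable (PiM ?B (\<lambda>_. borel :: real measure))"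
        by (intro measurable_component_singleton) auto
    qed
    have "P.indep_var borel ((\<lambda>f. \<Sum>i=1..Nr. f (Inl i)) \<circ> (\<lambda>\<omega>. restrict (\<lambda>i. F i \<omega>) ?A))
        borel ((\<lambda>f. \<Sum>k=1..Nd. f (Inr (Inr k))) \<circ> (\<lambda>\<omega>. restrict (\<lambda>i. F i \<omega>) ?B))"
      by (rule P.indep_var_compose[OF iv m1 m2])
    moreover have "(\<lambda>f. \<Sum>i=1..Nr. f (Inl i)) \<circ> (\<lambda>\<omega>. restrict (\<lambda>i. F i \<omega>) ?A) = gsr"
      unfolding gsr_def F_def by (auto simp: fun_eq_iff intro!: sum.cong)
    moreover have "(\<lambda>f. \<Sum>k=1..Nd. f (Inr (Inr k))) \<circ> (\<lambda>\<omega>. restrict (\<lambda>i. F i \<omega>) ?B) = grd"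
      unfolding grd_def F_def by (auto simp: fun_eq_iff intro!: sum.cong)
    ultimately show ?thesis by simp
  qed
  have gsr_m[measurable]: "gsr \<in> borel_measurable M" using distributed_measurable[OF Dsr] by simp
  have grd_m[measurable]: "grd \<in> borel_measurable M" using distributed_measurable[OF Drd] by simp
  have Y_m[measurable]: "Y \<in> borel_measurable M" unfolding Y_def by measurable
  have tail: "P.prob {\<omega> \<in> space M. t < Y \<omega>} = (\<Sum>\<mu><msr * Nr. \<Sum>\<nu><mrd * Nd. c \<mu> \<nu> * (t^(\<mu>+\<nu>) * exp (- \<Xi> * t)))"
    if t: "0 \<le> t" for t
  proof -
    have t2: "0 \<le> t / a2" using t a2 by simp
    have K1: "0 < msr * Nr" and K2: "0 < mrd * Nd" using A(2-6) by auto
    have "{\<omega> \<in> space M. t < Y \<omega>} = (\<lambda>\<omega>. (gsr \<omega>, grd \<omega>)) -` ({t/a2<..} \<times> {t<..}) \<inter> space M"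
      using a2 by (auto simp: Y_def field_simps)
    then have "P.prob {\<omega> \<in> space M. t < Y \<omega>} = P.prob (gsr -` {t/a2<..} \<inter> space M) * P.prob (grd -` {t<..} \<inter> space M)"
      using P.indep_varD[OF indep, of "{t/a2<..}" "{t<..}"] by simp
    also have "P.prob (gsr -` {t/a2<..} \<inter> space M) = P.prob {\<omega> \<in> space M. t/a2 < gsr \<omega>}"
      by (intro arg_cong[where f=P.prob]) auto
    also have "\<dots> = 1 - erlang_CDF (msr * Nr - 1) l1 (t/a2)"
      by (rule P.erlang_distributed_gt[OF Dsr l1 t2])
    also have "\<dots> = (\<Sum>\<mu><msr * Nr. (l1 * (t/a2))^\<mu> * exp (- l1 * (t/a2)) / fact \<mu>)"
      by (rule tail_sum[OF l1 t2 K1])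
    also have "P.prob (grd -` {t<..} \<inter> space M) = P.prob {\<omega> \<in> space M. t < grd \<omega>}"
      by (intro arg_cong[where f=P.prob]) auto
    also have "\<dots> = 1 - erlang_CDF (mrd * Nd - 1) l2 t"
      by (rule P.erlang_distributed_gt[OF Drd l2 t])
    also have "\<dots> = (\<Sum>\<nu><mrd * Nd. (l2 * t)^\<nu> * exp (- l2 * t) / fact \<nu>)"
      by (rule tail_sum[OF l2 t K2])
    also have "(\<Sum>\<mu><msr * Nr. (l1 * (t/a2))^\<mu> * exp (- l1 * (t/a2)) / fact \<mu>) * (\<Sum>\<nu><mrd * Nd. (l2 * t)^\<nu> * exp (- l2 * t) / fact \<nu>)
       = (\<Sum>\<mu><msr * Nr. \<Sum>\<nu><mrd * Nd. c \<mu> \<nu> * (t^(\<mu>+\<nu>) * exp (- \<Xi> * t)))"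
      unfolding sum_product
    proof (intro sum.cong refl)
      fix \<mu> \<nu>
      have e: "exp (- l1 * (t/a2)) * exp (- l2 * t) = exp (- \<Xi> * t)"
        unfolding exp_add[symmetric] l1_def l2_def \<Xi>_def using a2 A(7,9) by (simp add: field_simps)
      have "(l1 * (t/a2))^\<mu> * exp (- l1 * (t/a2)) / fact \<mu> * ((l2 * t)^\<nu> * exp (- l2 * t) / fact \<nu>)
          = ((l1/a2)^\<mu> * l2^\<nu> / (fact \<mu> * fact \<nu>)) * t^(\<mu>+\<nu>) * (exp (- l1 * (t/a2)) * exp (- l2 * t))"
        by (simp add: power_mult_distrib power_add field_simps)
      also have "(l1/a2)^\<mu> * l2^\<nu> / (fact \<mu> * fact \<nu>) = c \<mu> \<nu>"
        unfolding c_def l1_def l2_def by (simp add: power_divide power_mult_distrib field_simps)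
      finally show "(l1 * (t/a2))^\<mu> * exp (- l1 * (t/a2)) / fact \<mu> * ((l2 * t)^\<nu> * exp (- l2 * t) / fact \<nu>) = c \<mu> \<nu> * (t^(\<mu>+\<nu>) * exp (- \<Xi> * t))"
        unfolding e by simp
    qed
    finally show ?thesis .
  qed
  have Y_nn: "AE \<omega> in M. 0 \<le> Y \<omega>"
  proof -
    have "AE \<omega> in M. 0 \<le> gsr \<omega>"
      by (subst P.distributed_AE2[OF Dsr]) (auto simp: erlang_density_def)
    moreover have "AE \<omega> in M. 0 \<le> grd \<omega>"
      by (subst P.distributed_AE2[OF Drd]) (auto simp: erlang_density_def)
    ultimately show ?thesis by eventually_elim (use a2 in \<open>simp add: Y_def\<close>)
  qed
  have nn: "(\<integral>\<^sup>+\<omega>. ennreal (log 2 (1 + \<rho> * Y \<omega>)) \<partial>M) = ennreal (S / ln 2)"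
  proof -
    interpret PS: pair_sigma_finite M lborel
      by (intro pair_sigma_finite.intro P.sigma_finite_measure_axioms lborel.sigma_finite_measure_axioms)
    let ?h = "\<lambda>\<omega> t. ennreal (indicator {0..} t * (if t < Y \<omega> then 1 else 0) * (\<rho> / (1 + \<rho> * t)) / ln 2)"
    have ln2: "0 < ln (2::real)" by simp
    have "(\<integral>\<^sup>+\<omega>. ennreal (log 2 (1 + \<rho> * Y \<omega>)) \<partial>M) = (\<integral>\<^sup>+\<omega>. \<integral>\<^sup>+t. ?h \<omega> t \<partial>lborel \<partial>M)"
    proof (rule nn_integral_cong_AE, rule eventually_mono[OF Y_nn])
      fix \<omega> assume y: "0 \<le> Y \<omega>"
      have "(\<integral>\<^sup>+t. ?h \<omega> t \<partial>lborel) = (\<integral>\<^sup>+t. ennreal (1 / ln 2) * ennreal (indicator {0..} t * (if t < Y \<omega> then 1 else 0) * (\<rho> / (1 + \<rho> * t))) \<partial>lborel)"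
        using ln2 by (intro nn_integral_cong) (simp add: ennreal_mult'[symmetric] mult.commute)
      also have "\<dots> = ennreal (1 / ln 2) * ennreal (ln (1 + \<rho> * Y \<omega>))"
        by (subst nn_integral_cmult) (simp_all only: ln_integral[OF y r], simp)
      also have "\<dots> = ennreal (log 2 (1 + \<rho> * Y \<omega>))"
        using ln2 by (simp add: ennreal_mult'[symmetric] log_def)
      finally show "ennreal (log 2 (1 + \<rho> * Y \<omega>)) = (\<integral>\<^sup>+t. ?h \<omega> t \<partial>lborel)" by simp
    qed
    also have "\<dots> = (\<integral>\<^sup>+t. \<integral>\<^sup>+\<omega>. ?h \<omega> t \<partial>M \<partial>lborel)"
      by (rule PS.Fubini'[symmetric]) measurable
    also have "\<dots> = (\<integral>\<^sup>+t. ennreal (indicator {0..} t * (\<rho> / (1 + \<rho> * t)) / ln 2 * P.prob {\<omega> \<in> space M. t < Y \<omega>}) \<partial>lborel)"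
    proof (rule nn_integral_cong)
      fix t :: real
      have nn0: "0 \<le> indicator {0..} t * (\<rho> / (1 + \<rho> * t)) / ln 2"
        using r ln2 by (cases "0 \<le> t") (auto simp: indicator_def)
      have "(\<integral>\<^sup>+\<omega>. ?h \<omega> t \<partial>M) = (\<integral>\<^sup>+\<omega>. ennreal (indicator {0..} t * (\<rho> / (1 + \<rho> * t)) / ln 2) * indicator {\<omega> \<in> space M. t < Y \<omega>} \<omega> \<partial>M)"
        by (intro nn_integral_cong) (auto simp: indicator_def)
      also have "\<dots> = ennreal (indicator {0..} t * (\<rho> / (1 + \<rho> * t)) / ln 2) * emeasure M {\<omega> \<in> space M. t < Y \<omega>}"
        by (rule nn_integral_cmult_indicator) measurable
      also have "\<dots> = ennreal (indicator {0..} t * (\<rho> / (1 + \<rho> * t)) / ln 2 * P.prob {\<omega> \<in> space M. t < Y \<omega>})"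
        using nn0 by (simp add: P.emeasure_eq_measure ennreal_mult'[symmetric] del: ennreal_mult')
      finally show "(\<integral>\<^sup>+\<omega>. ?h \<omega> t \<partial>M) = \<dots>" .
    qed
    also have "\<dots> = (\<integral>\<^sup>+t. (\<Sum>\<mu><msr * Nr. \<Sum>\<nu><mrd * Nd. ennreal (c \<mu> \<nu> / ln 2 * (indicator {0..} t * (\<rho> * t^(\<mu>+\<nu>) * exp (- \<Xi> * t) / (1 + \<rho> * t))))) \<partial>lborel)"
    proof (rule nn_integral_cong)
      fix t :: real
      show "ennreal (indicator {0..} t * (\<rho> / (1 + \<rho> * t)) / ln 2 * P.prob {\<omega> \<in> space M. t < Y \<omega>}) = (\<Sum>\<mu><msr * Nr. \<Sum>\<nu><mrd * Nd. ennreal (c \<mu> \<nu> / ln 2 * (indicator {0..} t * (\<rho> * t^(\<mu>+\<nu>) * exp (- \<Xi> * t) / (1 + \<rho> * t)))))"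
      proof (cases "0 \<le> t")
        case True
        have pos: "0 < 1 + \<rho> * t" using True r by (simp add: add_pos_nonneg)
        have "(\<Sum>\<mu><msr * Nr. \<Sum>\<nu><mrd * Nd. ennreal (c \<mu> \<nu> / ln 2 * (indicator {0..} t * (\<rho> * t^(\<mu>+\<nu>) * exp (- \<Xi> * t) / (1 + \<rho> * t)))))
          = ennreal (\<Sum>\<mu><msr * Nr. \<Sum>\<nu><mrd * Nd. c \<mu> \<nu> / ln 2 * (indicator {0..} t * (\<rho> * t^(\<mu>+\<nu>) * exp (- \<Xi> * t) / (1 + \<rho> * t))))"
        proof -
          have fnn: "0 \<le> c \<mu> \<nu> / ln 2 * (indicator {0..} t * (\<rho> * t^(\<mu>+\<nu>) * exp (- \<Xi> * t) / (1 + \<rho> * t)))" for \<mu> \<nu>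
            using True c_nn[of \<mu> \<nu>] r pos ln2 by (intro mult_nonneg_nonneg divide_nonneg_nonneg) auto
          show ?thesis
            using fnn by (subst sum_ennreal, simp, subst sum_ennreal, auto intro!: sum_nonneg)
        qed
        also have "(\<Sum>\<mu><msr * Nr. \<Sum>\<nu><mrd * Nd. c \<mu> \<nu> / ln 2 * (indicator {0..} t * (\<rho> * t^(\<mu>+\<nu>) * exp (- \<Xi> * t) / (1 + \<rho> * t))))
          = indicator {0..} t * (\<rho> / (1 + \<rho> * t)) / ln 2 * P.prob {\<omega> \<in> space M. t < Y \<omega>}"
          unfolding tail[OF True] using True by (simp add: sum_distrib_left sum_divide_distrib field_simps)
        finally show ?thesis by simp
      qed (simp add: indicator_def)
    qed
    also have "\<dots> = (\<Sum>\<mu><msr * Nr. \<Sum>\<nu><mrd * Nd. ennreal (c \<mu> \<nu> / ln 2) * ennreal (fact (\<mu>+\<nu>) / \<rho>^(\<mu>+\<nu>) * exp (\<Xi>/\<rho>) * upper_inc_Gamma (- real (\<mu>+\<nu>)) (\<Xi>/\<rho>)))"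
    proof -
      have "(\<integral>\<^sup>+t. (\<Sum>\<mu><msr * Nr. \<Sum>\<nu><mrd * Nd. ennreal (c \<mu> \<nu> / ln 2 * (indicator {0..} t * (\<rho> * t^(\<mu>+\<nu>) * exp (- \<Xi> * t) / (1 + \<rho> * t))))) \<partial>lborel)
        = (\<Sum>\<mu><msr * Nr. \<Sum>\<nu><mrd * Nd. \<integral>\<^sup>+t. ennreal (c \<mu> \<nu> / ln 2) * ennreal (indicator {0..} t * (\<rho> * t^(\<mu>+\<nu>) * exp (- \<Xi> * t) / (1 + \<rho> * t))) \<partial>lborel)"
        apply (subst nn_integral_sum, measurable)
        apply (intro sum.cong refl)
        apply (subst nn_integral_sum, measurable)
        apply (intro sum.cong refl nn_integral_cong)
        using c_nn ln2 by (subst ennreal_mult') auto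
      also have "\<dots> = (\<Sum>\<mu><msr * Nr. \<Sum>\<nu><mrd * Nd. ennreal (c \<mu> \<nu> / ln 2) * ennreal (fact (\<mu>+\<nu>) / \<rho>^(\<mu>+\<nu>) * exp (\<Xi>/\<rho>) * upper_inc_Gamma (- real (\<mu>+\<nu>)) (\<Xi>/\<rho>)))"
        apply (intro sum.cong refl)
        apply (subst nn_integral_cmult, measurable)
        using key_integral[OF Xi r] by simp
      finally show ?thesis .
    qed
    also have "\<dots> = ennreal (S / ln 2)"
      unfolding S_def sum_divide_distrib
      using c_nn r ln2 upper_inc_Gamma_nonneg
      by (subst sum_ennreal[symmetric], (intro sum_nonneg; simp),
          intro sum.cong refl, subst sum_ennreal[symmetric], simp,
          intro sum.cong refl) (simp add: ennreal_mult'[symmetric] field_simps)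
    finally show ?thesis .
  qed
  have "has_bochner_integral M (\<lambda>\<omega>. log 2 (1 + \<rho> * Y \<omega>)) (S / ln 2)"
  proof (rule has_bochner_integral_nn_integral)
    show "(\<lambda>\<omega>. log 2 (1 + \<rho> * Y \<omega>)) \<in> borel_measurable M" by measurable
    show "AE \<omega> in M. 0 \<le> log 2 (1 + \<rho> * Y \<omega>)"
    proof (rule eventually_mono[OF Y_nn])
      fix \<omega> assume "0 \<le> Y \<omega>"
      then have "1 \<le> 1 + \<rho> * Y \<omega>" using r by simp
      then show "0 \<le> log 2 (1 + \<rho> * Y \<omega>)" by simp
    qed
    show "0 \<le> S / ln 2" using S_nn by simp
  qed (rule nn)
  then have I: "(\<integral>\<omega>. log 2 (1 + \<rho> * Y \<omega>) \<partial>M) = S / ln 2"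
    by (rule has_bochner_integral_integral_eq)
  have I': "(\<integral>\<omega>. log 2 (1 + \<rho> * min (a2 * gsr \<omega>) (grd \<omega>)) \<partial>M) = S / ln 2"
    using I by (simp add: Y_def)
  have G: "Gamma (real (\<mu> + \<nu> + 1)) = fact (\<mu> + \<nu>)" for \<mu> \<nu> :: nat
    using Gamma_fact[of "\<mu> + \<nu>", where 'a=real] by (simp add: add.commute)
  show ?thesis
    unfolding Let_def gsr_def[symmetric] grd_def[symmetric] \<Xi>_def[symmetric] I' G
    unfolding S_def c_def by (simp add: mult.assoc)
qed

end
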